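(* Let $S_\psi\subset\mathbb{R}^3$ be the surface of revolution parametrized by $(r,\theta)\mapsto(\psi(r)\cos\theta,\psi(r)\sin\theta,\chi(r))$, $(r,\theta)\in[r_1,r_2]\times[0,2\pi)$, and let $\Omega=\{(\psi(r)\cos\theta,\psi(r)\sin\theta,\chi(r)) : r\in[0,a],\ \theta\in(0,2\pi]\}$ with $r_1\le0<a\le r_2$. Let $0<R_1<R_2<a$, $\beta>0$, $B>\overline B:=\max_{[0,a]}|(\psi'/\psi)'|$, let $z_1$ be the solution of $\big[\frac{(\psi z)'}{\psi}\big]'-Bz=0$ in $[0,R_1)$ with $z(0)=0$, $z'(0)=1$, let $z_2$ be the solution of the same equation in $(R_2,a]$ with $z(a)=\beta$, $z'(a)=-1$, and let $z=z_\beta$ be defined by $z=z_1$ on $[0,R_1)$, $z=z_3$ on $[R_1,R_2]$, $z=z_2$ on $(R_2,a]$, where $z_3$ is any positive smooth function such that $z$ is smooth on $[0,a]$. Then there exists $f\in C^1(\mathbb{R})$ such that $Z(r):=\int_0^rz(s)\,ds$ ($r\in[0,a]$) is a stationary solution of $$\Delta Z+f(Z)=0\text{ in }\Omega,\qquad\frac{\partial Z}{\partial\nu}+\alpha Z=0\text{ on }\partial\Omega,\qquad\text{with }\ \alpha=-\frac{\beta}{\int_0^az(r)\,dr},$$ and $Z$ satisfies $$L_a\big[H_a\alpha^2Z(a)^2+\alpha Z(a)f(Z(a))+\alpha^3Z(a)^2\big]+L_0\big[H_0\alpha^2Z(0)^2+\alpha Z(0)f(Z(0))+\alpha^3Z(0)^2\big]<0,$$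 where $L_0=2\pi\psi(0)$, $L_a=2\pi\psi(a)$, $H_a=-\frac{\psi'(a)}{\psi(a)}$, $H_0=\frac{\psi'(0)}{\psi(0)}$.
   Context: Here $r\mapsto(\psi(r),\chi(r))$ is a simple regular plane curve, $\psi\in C^2([r_1,r_2])$, $\psi>0$ on $[r_1,r_2]$, $(\psi')^2+(\chi')^2=1$, and $\chi'(0)>0$, $\chi'(a)>0$. $S_\psi$ carries the metric $dr^2+\psi(r)^2d\theta^2$, with Laplace–Beltrami operator $\Delta u=u_{rr}+\frac{\psi'}{\psi}u_r+\frac1{\psi^2}u_{\theta\theta}$; $\partial\Omega$ consists of the circles $r=0$ and $r=a$ with outer unit normal $\nu=-\partial_r$ on $r=0$ and $\nu=\partial_r$ on $r=a$. A radial function $Z(r)$ is viewed as a function on $\Omega$. *)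

theory Defs
  imports "HOL-Analysis.Analysis"
begin

text \<open>Laplace--Beltrami operator of the metric dr^2 + psi(r)^2 dtheta^2 on S_psi,
  written in the coordinates (r, theta), applied to u r theta.\<close>
definition LB_laplacian :: "(real \<Rightarrow> real) \<Rightarrow> (real \<Rightarrow> real \<Rightarrow> real) \<Rightarrow> real \<Rightarrow> real \<Rightarrow> real" where
  "LB_laplacian psi u r \<theta> =
     deriv (\<lambda>s. deriv (\<lambda>t. u t \<theta>) s) r
     + deriv psi r / psi r * deriv (\<lambda>t. u t \<theta>) r
     + 1 / (psi r)^2 * deriv (\<lambda>s. deriv (\<lambda>t. u r t) s) \<theta>"

text \<open>u (in coordinates (r,theta), r in [0,a], theta in (0,2pi]) is a (classical) stationary
  solution of  Delta u + f(u) = 0 in Omega,  du/dnu + alpha u = 0 on dOmega,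
  where dOmega = {r = 0} (nu = -d/dr) union {r = a} (nu = d/dr).\<close>
definition stationary_solution ::
  "(real \<Rightarrow> real) \<Rightarrow> real \<Rightarrow> (real \<Rightarrow> real) \<Rightarrow> real \<Rightarrow> (real \<Rightarrow> real \<Rightarrow> real) \<Rightarrow> bool" where
  "stationary_solution psi a f alpha u \<longleftrightarrow>
     (\<forall>r \<theta>. 0 < r \<and> r < a \<and> 0 < \<theta> \<and> \<theta> \<le> 2 * pi \<longrightarrow>
        (\<lambda>t. u t \<theta>) differentiable (at r) \<and> deriv (\<lambda>t. u t \<theta>) differentiable (at r) \<and>
        (\<lambda>t. u r t) differentiable (at \<theta>) \<and> deriv (\<lambda>t. u r t) differentiable (at \<theta>) \<and>
        LB_laplacian psi u r \<theta> + f (u r \<theta>) = 0) \<and>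
     (\<forall>\<theta>. 0 < \<theta> \<and> \<theta> \<le> 2 * pi \<longrightarrow>
        (\<exists>d. ((\<lambda>t. u t \<theta>) has_real_derivative d) (at 0 within {0..a}) \<and> - d + alpha * u 0 \<theta> = 0)) \<and>
     (\<forall>\<theta>. 0 < \<theta> \<and> \<theta> \<le> 2 * pi \<longrightarrow>
        (\<exists>d. ((\<lambda>t. u t \<theta>) has_real_derivative d) (at a within {0..a}) \<and> d + alpha * u a \<theta> = 0))"

definition C1_real :: "(real \<Rightarrow> real) \<Rightarrow> bool" where
  "C1_real f \<longleftrightarrow> (\<exists>f'. (\<forall>x. (f has_real_derivative f' x) (at x)) \<and> continuous_on UNIV f')"

end

theory Submission
  imports Defs
begin


lemma uniq_within:
  fixes f :: "real \<Rightarrow> real"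
  assumes "a < b" "x \<in> {a..b}" "(f has_real_derivative d1) (at x within {a..b})"
    "(f has_real_derivative d2) (at x within {a..b})"
  shows "d1 = d2"
  using vector_derivative_unique_within_closed_interval[of a b x f d1 d2] assms
  by (simp add: has_real_derivative_iff_has_vector_derivative)

lemma no_max:
  fixes w w' :: "real \<Rightarrow> real"
  assumes "m < hi" "\<And>x. x \<in> {m..hi} \<Longrightarrow> (w has_real_derivative w' x) (at x)"
    "(w' has_real_derivative l) (at m)" "l > 0" "w' m = 0"
  shows "\<exists>y\<in>{m<..hi}. w y > w m"
proof -
  obtain d where d: "d>0" "\<forall>h>0. h<d \<longrightarrow> w' m < w' (m+h)"
    using DERIV_pos_inc_right[OF assms(3,4)] by auto
  define h where "h = min (d/2) (hi - m)"
  have h: "h > 0" "h < d" "m + h \<le> hi" using d assms(1) by (auto simp: h_def)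
  obtain \<xi> where xi: "m < \<xi>" "\<xi> < m+h" "w (m+h) - w m = h * w' \<xi>"
    using MVT2[of m "m+h" w w'] h assms(2) by auto
  have "w' \<xi> > 0" using d(2)[rule_format, of "\<xi> - m"] xi h assms(5) by auto
  then have "h * w' \<xi> > 0" using h(1) by simp
  then have "w (m+h) > w m" using xi by linarith
  then show ?thesis using h by (intro bexI[of _ "m+h"]) auto
qed

theorem lemma5p5:
  fixes psi psi' psi'' chi chi' z z' z'' :: "real \<Rightarrow> real"
    and r1 r2 a R1 R2 \<beta> B :: real
  assumes r_bounds: "r1 \<le> 0" "0 < a" "a \<le> r2"
    and psi_d1: "\<And>r. r \<in> {r1..r2} \<Longrightarrow> (psi has_real_derivative psi' r) (at r within {r1..r2})"
    and psi_d2: "\<And>r. r \<in> {r1..r2} \<Longrightarrow> (psi' has_real_derivative psi'' r) (at r within {r1..r2})"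
    and psi_C2: "continuous_on {r1..r2} psi''"
    and psi_pos: "\<And>r. r \<in> {r1..r2} \<Longrightarrow> psi r > 0"
    and chi_d: "\<And>r. r \<in> {r1..r2} \<Longrightarrow> (chi has_real_derivative chi' r) (at r within {r1..r2})"
    and unit_speed: "\<And>r. r \<in> {r1..r2} \<Longrightarrow> (psi' r)^2 + (chi' r)^2 = 1"
    and simple: "inj_on (\<lambda>r. (psi r, chi r)) {r1..r2}"
    and chi'_0: "chi' 0 > 0" and chi'_a: "chi' a > 0"
    and R: "0 < R1" "R1 < R2" "R2 < a"
    and beta_pos: "\<beta> > 0"
    and B_big: "\<And>r q. r \<in> {0..a} \<Longrightarrow>
        ((\<lambda>s. psi' s / psi s) has_real_derivative q) (at r within {r1..r2}) \<Longrightarrow> \<bar>q\<bar> < B"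
    and z_d1: "\<And>r. r \<in> {0..a} \<Longrightarrow> (z has_real_derivative z' r) (at r within {0..a})"
    and z_d2: "\<And>r. r \<in> {0..a} \<Longrightarrow> (z' has_real_derivative z'' r) (at r within {0..a})"
    and z_C2: "continuous_on {0..a} z''"
    and z1_ode: "\<And>r. r \<in> {0..<R1} \<Longrightarrow>
        ((\<lambda>s. (psi' s * z s + psi s * z' s) / psi s) has_real_derivative B * z r) (at r within {0..a})"
    and z1_init: "z 0 = 0" "z' 0 = 1"
    and z2_ode: "\<And>r. r \<in> {R2<..a} \<Longrightarrow>
        ((\<lambda>s. (psi' s * z s + psi s * z' s) / psi s) has_real_derivative B * z r) (at r within {0..a})"
    and z2_init: "z a = \<beta>" "z' a = -1"
    and z3_pos: "\<And>r. r \<in> {R1..R2} \<Longrightarrow> z r > 0"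
  shows "\<exists>f. C1_real f \<and>
    (let Z = (\<lambda>r. integral {0..r} z);
         \<alpha> = - \<beta> / integral {0..a} z;
         L0 = 2 * pi * psi 0; La = 2 * pi * psi a;
         Ha = - psi' a / psi a; H0 = psi' 0 / psi 0
     in stationary_solution psi a f \<alpha> (\<lambda>r \<theta>. Z r) \<and>
        La * (Ha * \<alpha>^2 * (Z a)^2 + \<alpha> * Z a * f (Z a) + \<alpha>^3 * (Z a)^2)
        + L0 * (H0 * \<alpha>^2 * (Z 0)^2 + \<alpha> * Z 0 * f (Z 0) + \<alpha>^3 * (Z 0)^2) < 0)"
proof -
  have sub: "{0..a} \<subseteq> {r1..r2}" using r_bounds by auto
  have psi_pos0: "\<And>r. r \<in> {0..a} \<Longrightarrow> psi r > 0" using psi_pos sub by auto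
  have psi_d1': "\<And>r. r \<in> {0..a} \<Longrightarrow> (psi has_real_derivative psi' r) (at r within {0..a})"
    using psi_d1 sub by (meson has_field_derivative_subset subsetD)
  have psi_d2': "\<And>r. r \<in> {0..a} \<Longrightarrow> (psi' has_real_derivative psi'' r) (at r within {0..a})"
    using psi_d2 sub by (meson has_field_derivative_subset subsetD)
  define p where "p s = psi' s / psi s" for s
  define q where "q s = (psi'' s * psi s - psi' s * psi' s) / (psi s * psi s)" for s
  define g where "g s = (psi' s * z s + psi s * z' s) / psi s" for s
  define G where "G s = ((psi' s * z' s + psi'' s * z s + (psi s * z'' s + psi' s * z' s)) * psi s
       - (psi' s * z s + psi s * z' s) * psi' s) / (psi s * psi s)" for s
  have q_bound: "\<bar>q r\<bar> < B" if r: "r \<in> {0..a}" for r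
  proof -
    have "psi r \<noteq> 0" using psi_pos0 r by force
    then have "((\<lambda>s. psi' s / psi s) has_real_derivative q r) (at r within {r1..r2})"
      unfolding q_def using DERIV_divide[OF psi_d2 psi_d1] r sub by auto
    then show ?thesis using B_big r by auto
  qed
  have gD: "(g has_real_derivative G r) (at r within {0..a})" if r: "r \<in> {0..a}" for r
  proof -
    have "psi r \<noteq> 0" using psi_pos0 r by force
    then show ?thesis unfolding g_def G_def
      by (intro DERIV_divide DERIV_add DERIV_mult' psi_d1' psi_d2' z_d1 z_d2 r)
  qed
  have ode: "G r = B * z r" if r: "r \<in> {0..<R1} \<union> {R2<..a}" for r
  proof -
    have r': "r \<in> {0..a}" using r R by auto
    have "(g has_real_derivative B * z r) (at r within {0..a})"
      using r z1_ode z2_ode unfolding g_def by auto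
    then show ?thesis using uniq_within[OF r_bounds(2) r' gD[OF r']] by auto
  qed
  have G_exp: "G r = z'' r + p r * z' r + q r * z r" if r: "r \<in> {0..a}" for r
  proof -
    have "psi r \<noteq> 0" using psi_pos0 r by force
    then show ?thesis unfolding G_def p_def q_def by (simp add: field_simps)
  qed
  have g_exp: "g r = z' r + p r * z r" if r: "r \<in> {0..a}" for r
  proof -
    have "psi r \<noteq> 0" using psi_pos0 r by force
    then show ?thesis unfolding g_def p_def by (simp add: field_simps)
  qed
  have z_cont: "continuous_on {0..a} z" using DERIV_continuous_on z_d1 by blast
  have z'_cont: "continuous_on {0..a} z'" using DERIV_continuous_on z_d2 by blast
  have g_cont: "continuous_on {0..a} g" using DERIV_continuous_on gD by blast
  have psi_cont: "continuous_on {0..a} psi" using DERIV_continuous_on psi_d1' by blast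
  have psi'_cont: "continuous_on {0..a} psi'" using DERIV_continuous_on psi_d2' by blast
  have psi''_cont: "continuous_on {0..a} psi''" using continuous_on_subset[OF psi_C2 sub] .
  have G_cont: "continuous_on {0..a} G"
    unfolding G_def
    by (intro continuous_intros z_cont z'_cont z_C2 psi_cont psi'_cont psi''_cont)
       (use psi_pos0 in force)
  have atI: "at r within {0..a} = at r" if "r \<in> {0<..<a}" for r
    using that by (auto intro: at_within_Icc_at)
  have z_at: "(z has_real_derivative z' r) (at r)" if "r \<in> {0<..<a}" for r
    using z_d1[of r] atI[OF that] that by auto
  have z'_at: "(z' has_real_derivative z'' r) (at r)" if "r \<in> {0<..<a}" for r
    using z_d2[of r] atI[OF that] that by auto
  have g_at: "(g has_real_derivative G r) (at r)" if "r \<in> {0<..<a}" for r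
    using gD[of r] atI[OF that] that by auto
  have nomax: "\<exists>y\<in>{m<..hi}. z y > z m" if m: "m \<in> {0<..<a}" and hi: "m < hi" "hi < a"
     and Gm: "G m = B * z m" and zm: "z m > 0" and z'm: "z' m = 0" for m hi
  proof -
    have m': "m \<in> {0..a}" using m by auto
    have "z'' m = (B - q m) * z m"
      using G_exp[OF m'] Gm z'm by (simp add: algebra_simps)
    moreover have "B - q m > 0" using q_bound[OF m'] by auto
    ultimately have pos: "z'' m > 0" using zm by simp
    show ?thesis
      by (rule no_max[OF hi(1) _ z'_at[OF m] pos z'm]) (use z_at m hi in auto)
  qed
  have zpos_mid: "z r > 0" if rin: "r \<in> {0<..a}" for r
  proof (cases "r < R1")
    case True
    show ?thesis
    proof (rule ccontr)
      assume neg: "\<not> z r > 0"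
      have rr: "0 < r" "r < a" using that True R by auto
      obtain d where d: "d > 0" "\<forall>h>0. 0 + h \<in> {0..a} \<longrightarrow> h < d \<longrightarrow> z 0 < z (0 + h)"
        using has_real_derivative_pos_inc_right[OF z_d1[of 0]] z1_init r_bounds by auto
      define t where "t = min (d/2) (r/2)"
      have t: "0 < t" "t < r" "z t > 0" using d rr z1_init by (auto simp: t_def)
      obtain m where m: "m \<in> {0..r}" "\<forall>y\<in>{0..r}. z y \<le> z m"
        using continuous_attains_sup[of "{0..r}" z] continuous_on_subset[OF z_cont] rr by auto
      have zm: "z m > 0" using m(2)[rule_format, of t] t by auto
      have m0: "0 < m" using zm z1_init m by (cases "m = 0") auto
      have mr: "m < r" using zm neg m by (cases "m = r") auto
      have mI: "m \<in> {0<..<a}" using m0 mr rr by auto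
      have z'm: "z' m = 0"
      proof (rule DERIV_local_max[OF z_at[OF mI]])
        show "0 < min m (r - m)" using m0 mr by auto
        show "\<forall>y. \<bar>m - y\<bar> < min m (r - m) \<longrightarrow> z y \<le> z m"
        proof (intro allI impI)
          fix y assume "\<bar>m - y\<bar> < min m (r - m)"
          then have "y \<in> {0..r}" by auto
          then show "z y \<le> z m" by (rule m(2)[rule_format])
        qed
      qed
      have "G m = B * z m" using ode[of m] mI mr True by auto
      then obtain y where y: "y \<in> {m<..r}" "z y > z m"
        using nomax[OF mI mr _ _ zm z'm] rr by auto
      moreover have "y \<in> {0..r}" using y m by auto
      ultimately show False using m(2) by fastforce
    qed
  next
    case False
    show ?thesis
    proof (cases "r \<le> R2")
      case True then show ?thesis using z3_pos False by auto
    next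
      case False2: False
      show ?thesis
      proof (rule ccontr)
        assume neg: "\<not> z r > 0"
        have ra: "r < a" using neg z2_init beta_pos that by (cases "r = a") auto
        obtain d where d: "d > 0" "\<forall>h>0. a - h \<in> {0..a} \<longrightarrow> h < d \<longrightarrow> z a < z (a - h)"
          using has_real_derivative_neg_dec_left[OF z_d1[of a]] z2_init r_bounds by auto
        define e where "e = min (d/2) ((a - r)/2)"
        have e: "0 < e" "e < d" "e \<le> (a - r)/2" using d(1) ra unfolding e_def by (auto simp: min_def)
        define t where "t = a - e"
        have t: "r < t" "t < a" using e ra by (auto simp: t_def)
        have "z a < z (a - e)" using d(2)[rule_format, of e] e ra that by auto
        then have t3: "z t > z a" by (simp add: t_def)
        obtain m where m: "m \<in> {r..a}" "\<forall>y\<in>{r..a}. z y \<le> z m"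
          using continuous_attains_sup[of "{r..a}" z] continuous_on_subset[OF z_cont, of "{r..a}"] ra rin by auto
        have zm: "z m > z a" using m(2)[rule_format, of t] t t3 by auto
        have ma: "m < a" using zm m by (cases "m = a") auto
        have mr: "r < m" using zm neg m z2_init beta_pos by (cases "m = r") auto
        have mI: "m \<in> {0<..<a}" using ma mr that by auto
        have z'm: "z' m = 0"
        proof (rule DERIV_local_max[OF z_at[OF mI]])
          show "0 < min (m - r) (a - m)" using ma mr by auto
          show "\<forall>y. \<bar>m - y\<bar> < min (m - r) (a - m) \<longrightarrow> z y \<le> z m"
          proof (intro allI impI)
            fix y assume "\<bar>m - y\<bar> < min (m - r) (a - m)"
            then have "y \<in> {r..a}" by auto
            then show "z y \<le> z m" by (rule m(2)[rule_format])
          qed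
        qed
        have "G m = B * z m" using ode[of m] mI mr False2 by auto
        then obtain y where y: "y \<in> {m<..(m+a)/2}" "z y > z m"
          using nomax[OF mI _ _ _ _ z'm, of "(m+a)/2"] ma zm z2_init beta_pos by auto
        moreover have "y \<in> {r..a}" using y m ma by auto
        ultimately show False using m(2) by fastforce
      qed
    qed
  qed
  define Z where "Z r = integral {0..r} z" for r
  have ZD: "(Z has_real_derivative z r) (at r within {0..a})" if "r \<in> {0..a}" for r
    unfolding Z_def[abs_def] has_real_derivative_iff_has_vector_derivative
    using integral_has_vector_derivative[OF z_cont that] .
  have Z_at: "(Z has_real_derivative z r) (at r)" if "r \<in> {0<..<a}" for r
    using ZD[of r] atI[OF that] that by auto
  have Z0: "Z 0 = 0" unfolding Z_def by simp
  have Z_cont: "continuous_on {0..a} Z" using DERIV_continuous_on ZD by blast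
  have Zmono: "Z x < Z y" if xy: "x \<in> {0..a}" "y \<in> {0..a}" "x < y" for x y
  proof -
    have "continuous_on {x..y} Z" using continuous_on_subset[OF Z_cont] xy by auto
    moreover have "Z differentiable (at t)" if "x < t" "t < y" for t
      using Z_at[of t] that xy real_differentiable_def by auto
    ultimately obtain l t where lt: "x < t" "t < y" "DERIV Z t :> l" "Z y - Z x = (y - x) * l"
      using MVT[OF xy(3)] by blast
    have tI: "t \<in> {0<..<a}" using lt xy by auto
    have "l = z t" using DERIV_unique[OF lt(3) Z_at[OF tI]] .
    moreover have "z t > 0" using zpos_mid tI by auto
    ultimately have "(y - x) * l > 0" using xy by simp
    then show ?thesis using lt by linarith
  qed
  have Zmono_iff: "Z x < Z y \<longleftrightarrow> x < y" if "x \<in> {0..a}" "y \<in> {0..a}" for x y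
    using Zmono[OF that] Zmono[OF that(2,1)] by (cases "x < y"; cases "x = y") auto
  have Za: "Z a > 0" using Zmono[of 0 a] Z0 r_bounds by auto
  have inj: "inj_on Z {0..a}"
    by (rule inj_onI) (metis Zmono less_irrefl linorder_neqE_linordered_idom)
  have Zimg: "Z ` {0..a} = {0..Z a}"
  proof
    show "Z ` {0..a} \<subseteq> {0..Z a}"
      using Zmono Z0 r_bounds by (force simp: less_eq_real_def)
    show "{0..Z a} \<subseteq> Z ` {0..a}"
    proof
      fix y assume "y \<in> {0..Z a}"
      then obtain x where "0 \<le> x" "x \<le> a" "Z x = y"
        using IVT'[of Z 0 y a] Z0 Z_cont r_bounds by auto
      then show "y \<in> Z ` {0..a}" by auto
    qed
  qed
  define Zi where "Zi = inv_into {0..a} Z"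
  have ZiZ: "Zi (Z r) = r" if "r \<in> {0..a}" for r
    unfolding Zi_def using inv_into_f_f[OF inj that] .
  have ZZi: "Z (Zi y) = y" "Zi y \<in> {0..a}" if "y \<in> {0..Z a}" for y
    unfolding Zi_def using that Zimg f_inv_into_f[of y Z "{0..a}"] inv_into_into[of y Z "{0..a}"]
    by auto
  have Zi_cont: "continuous_on {0..Z a} Zi"
    using continuous_on_inv[OF Z_cont compact_Icc, of Zi] ZiZ Zimg by auto
  have Zi_int: "Zi y \<in> {0<..<a}" if y: "y \<in> {0<..<Z a}" for y
  proof -
    have y': "y \<in> {0..Z a}" using y by auto
    have "Zi y \<noteq> 0" using ZZi(1)[OF y'] Z0 y by auto
    moreover have "Zi y \<noteq> a" using ZZi(1)[OF y'] y by auto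
    ultimately show ?thesis using ZZi(2)[OF y'] by auto
  qed
  have const_lemma: "h r = h lo" if hh: "lo < r" "continuous_on {lo..r} h"
     "\<And>t. lo < t \<Longrightarrow> t < r \<Longrightarrow> (h has_real_derivative 0) (at t)" for h lo r
  proof -
    obtain l t where "lo < t" "t < r" "DERIV h t :> l" "h r - h lo = (r - lo) * l"
      using MVT[OF hh(1,2)] hh(3) real_differentiable_def by blast
    then show ?thesis using DERIV_unique[OF _ hh(3)] by force
  qed
  have glin1: "g r = g 0 + B * Z r" if r: "r \<in> {0..R1}" for r
  proof (cases "r = 0")
    case True then show ?thesis using Z0 by simp
  next
    case False
    have "g r - B * Z r = g 0 - B * Z 0"
    proof (rule const_lemma[where h="\<lambda>s. g s - B * Z s" and lo=0 and r=r])
      show "0 < r" using r False by auto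
      show "continuous_on {0..r} (\<lambda>s. g s - B * Z s)"
        using r R by (intro continuous_intros continuous_on_subset[OF g_cont]
            continuous_on_subset[OF Z_cont]) auto
      fix t assume t: "0 < t" "t < r"
      have tI: "t \<in> {0<..<a}" using t r R by auto
      have "G t = B * z t" using ode[of t] t r by auto
      then show "((\<lambda>s. g s - B * Z s) has_real_derivative 0) (at t)"
        using DERIV_diff[OF g_at[OF tI] DERIV_cmult[OF Z_at[OF tI], of B]] by simp
    qed
    then show ?thesis using Z0 by simp
  qed
  have glin2: "g r = g a + B * (Z r - Z a)" if r: "r \<in> {R2..a}" for r
  proof (cases "r = a")
    case True then show ?thesis by simp
  next
    case False
    have "g a - B * Z a = g r - B * Z r"
    proof (rule const_lemma[where h="\<lambda>s. g s - B * Z s" and lo=r and r=a])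
      show "r < a" using r False by auto
      show "continuous_on {r..a} (\<lambda>s. g s - B * Z s)"
        using r R by (intro continuous_intros continuous_on_subset[OF g_cont]
            continuous_on_subset[OF Z_cont]) auto
      fix t assume t: "r < t" "t < a"
      have tI: "t \<in> {0<..<a}" using t r R by auto
      have "G t = B * z t" using ode[of t] t r R by auto
      then show "((\<lambda>s. g s - B * Z s) has_real_derivative 0) (at t)"
        using DERIV_diff[OF g_at[OF tI] DERIV_cmult[OF Z_at[OF tI], of B]] by simp
    qed
    then show ?thesis by (simp add: algebra_simps)
  qed
  define f where "f y = (if y < Z R1 then - g 0 - B * y
      else if y > Z R2 then - g a - B * (y - Z a) else - g (Zi y))" for y
  have f_eq: "f (Z r) = - g r" if r: "r \<in> {0..a}" for r
  proof -
    have R1I: "R1 \<in> {0..a}" "R2 \<in> {0..a}" using R by auto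
    show ?thesis
    proof (cases "Z r < Z R1")
      case True
      then have "r < R1" using Zmono_iff[OF r R1I(1)] by auto
      then show ?thesis using glin1[of r] r True unfolding f_def by auto
    next
      case False
      show ?thesis
      proof (cases "Z r > Z R2")
        case True
        then have "r > R2" using Zmono_iff[OF R1I(2) r] by auto
        then show ?thesis using glin2[of r] r True False unfolding f_def by auto
      next
        case False2: False
        then show ?thesis using False ZiZ[OF r] unfolding f_def by auto
      qed
    qed
  qed
  have f_mid: "f y = - g (Zi y)" if y: "y \<in> {0<..<Z a}" for y
    using f_eq[of "Zi y"] ZZi[of y] y by auto
  have ZR: "0 < Z R1" "Z R2 < Z a" "Z R1 < Z R2" using Zmono[of 0 R1] Zmono[of R2 a] Zmono[of R1 R2] Z0 R by auto
  define f' where "f' y = (if y \<in> {0<..<Z a} then - G (Zi y) / z (Zi y) else - B)" for y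
  have f'_side: "f' y = - B" if y: "y < Z R1 \<or> y > Z R2" for y
  proof (cases "y \<in> {0<..<Z a}")
    case False then show ?thesis unfolding f'_def by auto
  next
    case True
    have r: "Zi y \<in> {0<..<a}" using Zi_int[OF True] .
    have ZZ: "Z (Zi y) = y" using ZZi(1)[of y] True by auto
    have R1I: "R1 \<in> {0..a}" "R2 \<in> {0..a}" using R by auto
    have "Zi y < R1 \<or> Zi y > R2"
      using y ZZ Zmono_iff[of "Zi y" R1] Zmono_iff[of R2 "Zi y"] r R1I by auto
    then have "G (Zi y) = B * z (Zi y)" using ode[of "Zi y"] r by auto
    moreover have "z (Zi y) > 0" using zpos_mid r by auto
    ultimately show ?thesis using True unfolding f'_def by auto
  qed
  have fD: "(f has_real_derivative f' y) (at y)" for y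
  proof (cases "y \<in> {0<..<Z a}")
    case True
    define r where "r = Zi y"
    have r: "r \<in> {0<..<a}" using Zi_int[OF True] r_def by auto
    have zr: "z r > 0" using zpos_mid r by auto
    have dZi: "DERIV Zi y :> inverse (z r)"
    proof (rule DERIV_inverse_function[where f=Z and g=Zi and x=y and D="z r" and a=0 and b="Z a"])
      show "DERIV Z (Zi y) :> z r" using Z_at r r_def by auto
      show "z r \<noteq> 0" using zr by auto
      show "0 < y" "y < Z a" using True by auto
      show "\<And>w. 0 < w \<Longrightarrow> w < Z a \<Longrightarrow> Z (Zi w) = w" using ZZi by auto
      have "continuous_on {0<..<Z a} Zi"
        by (rule continuous_on_subset[OF Zi_cont]) auto
      then show "isCont Zi y"
        using continuous_on_eq_continuous_at[of "{0<..<Z a}" Zi] True by auto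
    qed
    have "((\<lambda>w. - g (Zi w)) has_real_derivative - (G r * inverse (z r))) (at y)"
      using DERIV_minus[OF DERIV_chain[OF g_at[OF r, unfolded r_def] dZi[unfolded r_def]]]
      unfolding r_def by (simp add: o_def)
    then have "(f has_real_derivative - (G r * inverse (z r))) (at y)"
      by (rule has_field_derivative_transform_within_open[of _ _ _ "{0<..<Z a}"])
         (use True f_mid in auto)
    then show ?thesis using True unfolding f'_def r_def by (simp add: divide_inverse)
  next
    case False
    then have "y \<le> 0 \<or> y \<ge> Z a" by auto
    then show ?thesis
    proof
      assume y: "y \<le> 0"
      have "((\<lambda>w. - g 0 - B * w) has_real_derivative - B) (at y)"
        by (auto intro!: derivative_eq_intros)
      then have "(f has_real_derivative - B) (at y)"
        by (rule has_field_derivative_transform_within_open[of _ _ _ "{..<Z R1}"])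
           (use y ZR in \<open>auto simp: f_def\<close>)
      then show ?thesis using f'_side[of y] y ZR by auto
    next
      assume y: "y \<ge> Z a"
      have "((\<lambda>w. - g a - B * (w - Z a)) has_real_derivative - B) (at y)"
        by (auto intro!: derivative_eq_intros)
      then have "(f has_real_derivative - B) (at y)"
        apply (rule has_field_derivative_transform_within_open[of _ _ _ "{Z R2<..}"])
        using y ZR ZR by (auto simp: f_def)
      then show ?thesis using f'_side[of y] y ZR by auto
    qed
  qed
  have f'_cont: "continuous_on UNIV f'"
  proof (rule continuous_at_imp_continuous_on, intro ballI)
    fix y :: real
    have c1: "isCont f' y" if "y < Z R1"
    proof -
      have "continuous_on {..<Z R1} f'"
        by (rule continuous_on_eq[of _ "\<lambda>x. - B"]) (auto simp: f'_side)
      then show ?thesis using that by (simp add: continuous_on_eq_continuous_at)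
    qed
    have c2: "isCont f' y" if "y > Z R2"
    proof -
      have "continuous_on {Z R2<..} f'"
        by (rule continuous_on_eq[of _ "\<lambda>x. - B"]) (auto simp: f'_side)
      then show ?thesis using that by (simp add: continuous_on_eq_continuous_at)
    qed
    have c3: "isCont f' y" if "y \<in> {0<..<Z a}"
    proof -
      have sub2: "Zi ` {0<..<Z a} \<subseteq> {0..a}"
      proof (rule image_subsetI)
        fix w assume "w \<in> {0<..<Z a}"
        then show "Zi w \<in> {0..a}" using Zi_int[of w] by auto
      qed
      have cz: "continuous_on {0<..<Z a} Zi" by (rule continuous_on_subset[OF Zi_cont]) auto
      have "continuous_on {0<..<Z a} (\<lambda>w. - G (Zi w) / z (Zi w))"
        using zpos_mid Zi_int
        by (intro continuous_intros continuous_on_compose2[OF G_cont cz sub2]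
            continuous_on_compose2[OF z_cont cz sub2]) force
      then have "continuous_on {0<..<Z a} f'"
        by (rule continuous_on_eq) (auto simp: f'_def)
      then show ?thesis using that by (simp add: continuous_on_eq_continuous_at)
    qed
    show "isCont f' y" using c1 c2 c3 ZR by fastforce
  qed
  have C1: "C1_real f" unfolding C1_real_def using fD f'_cont by blast
  define \<alpha> where "\<alpha> = - \<beta> / Z a"
  have dconst: "deriv (\<lambda>t::real. c) = (\<lambda>_. 0)" for c :: real
    by (rule ext, rule DERIV_imp_deriv) simp
  have dZ_eq: "deriv Z s = z s" if "s \<in> {0<..<a}" for s
    using Z_at[OF that] DERIV_imp_deriv by blast
  have stat: "stationary_solution psi a f \<alpha> (\<lambda>r \<theta>. Z r)"
    unfolding stationary_solution_def LB_laplacian_def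
  proof (intro conjI allI impI)
    fix r \<theta> :: real assume h: "0 < r \<and> r < a \<and> 0 < \<theta> \<and> \<theta> \<le> 2*pi"
    hence rI: "r \<in> {0<..<a}" by auto
    have ddZ: "(deriv Z has_real_derivative z' r) (at r)"
      by (rule has_field_derivative_transform_within_open[OF z_at[OF rI] open_greaterThanLessThan rI])
         (use dZ_eq in auto)
    show "(\<lambda>t. Z t) differentiable (at r)" using Z_at[OF rI] real_differentiable_def by auto
    show "deriv (\<lambda>t. Z t) differentiable (at r)" using ddZ real_differentiable_def by auto
    show "(\<lambda>t. Z r) differentiable (at \<theta>)" by simp
    show "deriv (\<lambda>t. Z r) differentiable (at \<theta>)" by (simp add: dconst)
    have "at r within {r1..r2} = at r" using h r_bounds by (intro at_within_Icc_at) auto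
    then have "deriv psi r = psi' r" using psi_d1[of r] h r_bounds DERIV_imp_deriv by auto
    moreover have "deriv (\<lambda>s. deriv (\<lambda>t. Z t) s) r = z' r" using ddZ DERIV_imp_deriv by auto
    moreover have "deriv (\<lambda>t. Z t) r = z r" using dZ_eq rI by auto
    moreover have "f (Z r) = - g r" using f_eq rI by auto
    moreover have "g r = z' r + psi' r / psi r * z r" using g_exp[of r] rI unfolding p_def by auto
    ultimately show "deriv (\<lambda>s. deriv (\<lambda>t. Z t) s) r + deriv psi r / psi r * deriv (\<lambda>t. Z t) r +
         1 / (psi r)\<^sup>2 * deriv (\<lambda>s. deriv (\<lambda>t. Z r) s) \<theta> + f (Z r) = 0"
      by (simp add: dconst)
  next
    fix \<theta> :: real
    show "\<exists>d. ((\<lambda>t. Z t) has_real_derivative d) (at 0 within {0..a}) \<and> - d + \<alpha> * Z 0 = 0"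
      using ZD[of 0] r_bounds z1_init Z0 by (intro exI[of _ "z 0"]) auto
  next
    fix \<theta> :: real
    show "\<exists>d. ((\<lambda>t. Z t) has_real_derivative d) (at a within {0..a}) \<and> d + \<alpha> * Z a = 0"
      using ZD[of a] r_bounds z2_init Za by (intro exI[of _ "z a"]) (auto simp: \<alpha>_def)
  qed
  have Pa: "psi a > 0" using psi_pos0 r_bounds by auto
  have fa: "f (Z a) = 1 - psi' a * \<beta> / psi a"
    using f_eq[of a] r_bounds z2_init Pa unfolding g_def by (auto simp: field_simps)
  have X: "(- psi' a / psi a) * \<alpha>^2 * (Z a)^2 + \<alpha> * Z a * f (Z a) + \<alpha>^3 * (Z a)^2
      = - \<beta> + \<alpha> * \<beta>^2"
    using Za Pa unfolding fa \<alpha>_def by (simp add: field_simps power2_eq_square power3_eq_cube)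
  have "\<alpha> < 0" using Za beta_pos unfolding \<alpha>_def by (simp add: divide_neg_pos)
  moreover have "\<beta>^2 > 0" using beta_pos by simp
  ultimately have "\<alpha> * \<beta>^2 < 0" by (simp add: mult_neg_pos)
  then have "- \<beta> + \<alpha> * \<beta>^2 < 0" using beta_pos by linarith
  then have ineq: "2 * pi * psi a * ((- psi' a / psi a) * \<alpha>^2 * (Z a)^2 + \<alpha> * Z a * f (Z a) + \<alpha>^3 * (Z a)^2)
     + 2 * pi * psi 0 * (psi' 0 / psi 0 * \<alpha>^2 * (Z 0)^2 + \<alpha> * Z 0 * f (Z 0) + \<alpha>^3 * (Z 0)^2) < 0"
    unfolding X Z0 using Pa by (simp add: mult_pos_neg)
  show ?thesis
    unfolding Let_def Z_def[symmetric]
    using C1 stat ineq unfolding \<alpha>_def by blast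
qed

end
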